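(* Let $\epsilon\in[0,1)$ and $\theta=\arcsin\!\big(3-\sqrt{4\epsilon+5}\big)$, $s:=\sin\theta$. Consider the two-qubit state $|\psi_\theta\rangle=\cos(\theta/2)|00\rangle-\sin(\theta/2)|11\rangle$ and the observables $$A_0=B_0=\frac{-(2+s)\sqrt{1-s}}{(2-s)\sqrt{1+s}}\,\sigma_z-\frac{\sqrt2\,s^{3/2}}{(2-s)\sqrt{1+s}}\,\sigma_x,\qquad A_1=B_1=-\sqrt{\frac{1-s}{1+s}}\,\sigma_z+\sqrt{\frac{2s}{1+s}}\,\sigma_x .$$ Define $p(ab|xy)=\langle\psi_\theta|\Pi^{a}_{A_x}\otimes\Pi^{b}_{B_y}|\psi_\theta\rangle$ with $\Pi^{a}_{O}=\tfrac12(\mathbb{1}+(-1)^aO)$. Then $p(01|01)=p(10|10)=p(00|11)=0$ and $$p(00|00)+\epsilon\,p(11|00)=\frac{(4\epsilon+5)\sqrt{4\epsilon+5}-(12\epsilon+11)}{2(1+\epsilon)}>\epsilon,$$ so that $(1-\epsilon)p(00|00)+\epsilon(1-\epsilon)p(11|00)-p(01|01)-p(10|10)-p(00|11)>\epsilon(1-\epsilon)$. In particular $p\notin\mathcal{P}_2^{AB,(\epsilon,\epsilon)}$.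
   Context: $\sigma_x,\sigma_z$ are the Pauli matrices; each observable above is a $\pm1$-valued qubit observable (unit Bloch vector). $\mathcal{P}_2^{AB,(\epsilon,\epsilon)}$ (for inputs and outputs in $\{0,1\}$) is the set of conditional distributions $p(ab|xy)=\int q(d\lambda)p_A(a|xy\lambda)p_B(b|xy\lambda)$, where $(\Lambda,q)$ is a probability space and $p_A(\cdot|x,y,\lambda),p_B(\cdot|x,y,\lambda)$ are distributions on $\{0,1\}$ satisfying $\frac12\sum_a|p_A(a|xy\lambda)-p_A(a|xy'\lambda)|\le\epsilon$ for all $x,y,y',\lambda$ and $\frac12\sum_b|p_B(b|xy\lambda)-p_B(b|x'y\lambda)|\le\epsilon$ for all $y,x,x',\lambda$. *)

theory Defs
  imports "HOL-Probability.Probability"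
begin

text \<open>Qubit operators as 2x2 complex matrices indexed by 0,1 (computational basis).\<close>

definition id2 :: "nat \<Rightarrow> nat \<Rightarrow> complex" where
  "id2 i j = (if i = j then 1 else 0)"

definition sigma_z :: "nat \<Rightarrow> nat \<Rightarrow> complex" where
  "sigma_z i j = (if i = j then (if i = 0 then 1 else -1) else 0)"

definition sigma_x :: "nat \<Rightarrow> nat \<Rightarrow> complex" where
  "sigma_x i j = (if i = j then 0 else 1)"

definition obs :: "real \<Rightarrow> real \<Rightarrow> nat \<Rightarrow> nat \<Rightarrow> complex" where
  "obs cz cx i j = of_real cz * sigma_z i j + of_real cx * sigma_x i j"

definition proj :: "(nat \<Rightarrow> nat \<Rightarrow> complex) \<Rightarrow> nat \<Rightarrow> nat \<Rightarrow> nat \<Rightarrow> complex" where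
  "proj Ob a i j = (id2 i j + (-1) ^ a * Ob i j) / 2"

definition psi :: "real \<Rightarrow> nat \<Rightarrow> nat \<Rightarrow> complex" where
  "psi \<theta> i j = (if i = 0 \<and> j = 0 then of_real (cos (\<theta>/2))
                else if i = 1 \<and> j = 1 then - of_real (sin (\<theta>/2)) else 0)"

definition expval :: "(nat \<Rightarrow> nat \<Rightarrow> complex) \<Rightarrow> (nat \<Rightarrow> nat \<Rightarrow> complex)
    \<Rightarrow> (nat \<Rightarrow> nat \<Rightarrow> complex) \<Rightarrow> complex" where
  "expval \<phi> P Q = (\<Sum>i<2. \<Sum>j<2. \<Sum>k<2. \<Sum>l<2. cnj (\<phi> i j) * P i k * Q j l * \<phi> k l)"

definition obsA0 :: "real \<Rightarrow> nat \<Rightarrow> nat \<Rightarrow> complex" where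
  "obsA0 s = obs (- (2 + s) * sqrt (1 - s) / ((2 - s) * sqrt (1 + s)))
                 (- (sqrt 2 * s powr (3/2)) / ((2 - s) * sqrt (1 + s)))"

definition obsA1 :: "real \<Rightarrow> nat \<Rightarrow> nat \<Rightarrow> complex" where
  "obsA1 s = obs (- sqrt ((1 - s) / (1 + s))) (sqrt (2 * s / (1 + s)))"

definition obsA :: "real \<Rightarrow> nat \<Rightarrow> nat \<Rightarrow> nat \<Rightarrow> complex" where
  "obsA s x = (if x = 0 then obsA0 s else obsA1 s)"

definition qprob :: "real \<Rightarrow> real \<Rightarrow> nat \<Rightarrow> nat \<Rightarrow> nat \<Rightarrow> nat \<Rightarrow> real" where
  "qprob \<theta> s a b x y = Re (expval (psi \<theta>) (proj (obsA s x) a) (proj (obsA s y) b))"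

text \<open>(M, pA, pB) is a local model witnessing p \<in> P_2^{AB,(eps,eps)}:
  pA a x y l = p_A(a|x y l), pB b x y l = p_B(b|x y l); inputs/outputs in {0,1}.\<close>
definition eps_local_model ::
  "real \<Rightarrow> (nat \<Rightarrow> nat \<Rightarrow> nat \<Rightarrow> nat \<Rightarrow> real) \<Rightarrow> 'l measure
    \<Rightarrow> (nat \<Rightarrow> nat \<Rightarrow> nat \<Rightarrow> 'l \<Rightarrow> real) \<Rightarrow> (nat \<Rightarrow> nat \<Rightarrow> nat \<Rightarrow> 'l \<Rightarrow> real) \<Rightarrow> bool" where
  "eps_local_model \<epsilon> p M pA pB \<longleftrightarrow>
     prob_space M \<and>
     (\<forall>a x y. pA a x y \<in> borel_measurable M \<and> pB a x y \<in> borel_measurable M) \<and>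
     (\<forall>x\<le>1. \<forall>y\<le>1. \<forall>l\<in>space M.
        (\<forall>a\<le>1. pA a x y l \<ge> 0 \<and> pB a x y l \<ge> 0) \<and>
        pA 0 x y l + pA 1 x y l = 1 \<and> pB 0 x y l + pB 1 x y l = 1) \<and>
     (\<forall>x\<le>1. \<forall>y\<le>1. \<forall>y'\<le>1. \<forall>l\<in>space M.
        (\<bar>pA 0 x y l - pA 0 x y' l\<bar> + \<bar>pA 1 x y l - pA 1 x y' l\<bar>) / 2 \<le> \<epsilon>) \<and>
     (\<forall>y\<le>1. \<forall>x\<le>1. \<forall>x'\<le>1. \<forall>l\<in>space M.
        (\<bar>pB 0 x y l - pB 0 x' y l\<bar> + \<bar>pB 1 x y l - pB 1 x' y l\<bar>) / 2 \<le> \<epsilon>) \<and>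
     (\<forall>a\<le>1. \<forall>b\<le>1. \<forall>x\<le>1. \<forall>y\<le>1.
        p a b x y = (\<integral>l. pA a x y l * pB b x y l \<partial>M))"

end

theory Submission
  imports Defs
begin

lemma expval_formula:
  fixes c d z1 w1 z2 w2 :: real
  shows "Re (expval (\<lambda>i j. if i = 0 \<and> j = 0 then of_real c else if i = 1 \<and> j = 1 then - of_real d else 0)
     (proj (obs z1 w1) a) (proj (obs z2 w2) b))
   = (c^2+d^2 + (-1)^a * z1 * (c^2-d^2) + (-1)^b * z2 * (c^2-d^2) + (-1)^(a+b) * (z1*z2*(c^2+d^2) - 2*c*d*w1*w2))/4"
  apply (simp add: expval_def numeral_2_eq_2 proj_def obs_def id2_def sigma_z_def sigma_x_def power_add
        algebra_simps power2_eq_square)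
  apply (simp add: field_simps)
  done

lemma loss:
  fixes e m a01 b01 a10 b10 a11 b11 :: real
  assumes "0 \<le> m" "m \<le> 1 - e" "m \<le> a01" "m \<le> b10" "e < 1"
   "0\<le>a01" "0\<le>b01" "b01\<le>1" "0\<le>a10" "a10\<le>1" "0\<le>b10" "0\<le>a11" "0\<le>b11"
   "a10 - e \<le> a11" "b01 - e \<le> b11"
  shows "a01*(1-b01) + (1-a10)*b10 + a11*b11 \<ge> (1-e)*m"
proof -
  have 1: "a01*(1-b01) \<ge> m*(1-b01)" using assms by (intro mult_right_mono) auto
  have 2: "(1-a10)*b10 \<ge> (1-a10)*m" using assms by (intro mult_left_mono) auto
  have 3: "a11*b11 + m*(1+e-b01-a10) \<ge> 0"
  proof (cases "a10 + b01 \<le> 1 + e")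
    case True
    then show ?thesis using assms by (simp add: add_nonneg_nonneg)
  next
    case False
    then have "a10 > e" "b01 > e" using assms by auto
    then have "a11*b11 \<ge> (a10-e)*(b01-e)" using assms by (intro mult_mono) auto
    moreover have "(1-e-(a10-e))*(1-e-(b01-e)) \<ge> 0" using assms by simp
    moreover have "(1-e-m)*((a10-e)+(b01-e)-(1-e)) \<ge> 0" using assms False by simp
    ultimately show ?thesis by (simp add: algebra_simps)
  qed
  show ?thesis using 1 2 3 by (simp add: algebra_simps)
qed

lemma gain:
  fixes e a b m :: real
  assumes "0 \<le> e" "e < 1" "0\<le>a" "a\<le>1" "0\<le>b" "b\<le>1"
    "m = min (1-e) (min (max 0 (a-e)) (max 0 (b-e)))"
  shows "(1-e)*(a*b) + e*(1-e)*((1-a)*(1-b)) - (1-e)*m \<le> e*(1-e)"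
proof -
  have "a*b + e*((1-a)*(1-b)) - m \<le> e"
  proof (cases "a \<le> e \<or> b \<le> e")
    case True
    then have m0: "m = 0" using assms by auto
    have aux: "x*t \<le> max 0 t" if "0 \<le> x" "x \<le> 1" for x t :: real
      using that by (cases "t \<le> 0") (auto intro: mult_nonneg_nonpos mult_left_le_one_le)
    show ?thesis
    proof (cases "b \<le> e")
      case True
      have "a*(b*(1+e) - e) \<le> max 0 (b*(1+e) - e)" using aux assms by auto
      also have "... \<le> e*b" using True assms by (auto simp: algebra_simps)
      finally show ?thesis using m0 by (simp add: algebra_simps)
    next
      case False
      then have "a \<le> e" using True by auto
      have "b*(a*(1+e) - e) \<le> max 0 (a*(1+e) - e)" using aux assms by auto
      also have "... \<le> e*a" using \<open>a \<le> e\<close> assms by (auto simp: algebra_simps)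
      finally show ?thesis using m0 by (simp add: algebra_simps)
    qed
  next
    case False
    then have mm: "m = min a b - e" using assms by (auto simp: min_def max_def)
    have ae: "0 \<le> a*e" "0 \<le> b*e" using assms by auto
    have key: "a*b + e*((1-a)*(1-b)) \<le> min a b"
    proof (cases "a \<le> b")
      case True
      have h: "e*(1-a) - a \<le> 0"
      proof -
        have "e*(1-a) - a = e - a*e - a" by (simp add: algebra_simps)
        then show ?thesis using ae False by linarith
      qed
      have "(1-b)*(e*(1-a) - a) \<le> 0"
        using assms h by (intro mult_nonneg_nonpos) auto
      then show ?thesis using True by (simp add: algebra_simps min_def)
    next
      case f2: False
      have h: "e*(1-b) - b \<le> 0"
      proof -
        have "e*(1-b) - b = e - b*e - b" by (simp add: algebra_simps)
        then show ?thesis using ae False by linarith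
      qed
      have "(1-a)*(e*(1-b) - b) \<le> 0"
        using assms h by (intro mult_nonneg_nonpos) auto
      then show ?thesis using f2 by (simp add: algebra_simps min_def)
    qed
    then show ?thesis using mm by linarith
  qed
  then have "(1-e)*(a*b + e*((1-a)*(1-b)) - m) \<le> (1-e)*e" using assms by (intro mult_left_mono) auto
  then show ?thesis by (simp add: algebra_simps)
qed

lemma pointwise:
  fixes e a b a01 b01 a10 b10 a11 b11 :: real
  assumes "0 \<le> e" "e < 1" "0\<le>a" "a\<le>1" "0\<le>b" "b\<le>1" "0\<le>a01" "a01\<le>1" "0\<le>b01" "b01\<le>1"
   "0\<le>a10" "a10\<le>1" "0\<le>b10" "b10\<le>1" "0\<le>a11" "a11\<le>1" "0\<le>b11" "b11\<le>1"
   "\<bar>a - a01\<bar> \<le> e" "\<bar>a10 - a11\<bar> \<le> e" "\<bar>b - b10\<bar> \<le> e" "\<bar>b01 - b11\<bar> \<le> e"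
  shows "(1-e)*(a*b) + e*(1-e)*((1-a)*(1-b)) - a01*(1-b01) - (1-a10)*b10 - a11*b11 \<le> e*(1-e)"
proof -
  define m where "m = min (1-e) (min (max 0 (a-e)) (max 0 (b-e)))"
  have L: "a01*(1-b01) + (1-a10)*b10 + a11*b11 \<ge> (1-e)*m"
    by (rule loss) (use assms in \<open>auto simp: m_def abs_le_iff\<close>)
  have G: "(1-e)*(a*b) + e*(1-e)*((1-a)*(1-b)) - (1-e)*m \<le> e*(1-e)"
    using gain[OF assms(1-6) m_def] .
  show ?thesis using L G by linarith
qed

definition zc :: "real \<Rightarrow> nat \<Rightarrow> real" where
  "zc s x = (if x = 0 then - (2 + s) * sqrt (1 - s) / ((2 - s) * sqrt (1 + s)) else - sqrt ((1 - s) / (1 + s)))"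
definition wc :: "real \<Rightarrow> nat \<Rightarrow> real" where
  "wc s x = (if x = 0 then - (sqrt 2 * s powr (3/2)) / ((2 - s) * sqrt (1 + s)) else sqrt (2 * s / (1 + s)))"

lemma obsA_eq: "obsA s x = obs (zc s x) (wc s x)"
  by (simp add: obsA_def obsA0_def obsA1_def zc_def wc_def)

lemma qprob_formula:
  "qprob \<theta> s a b x y = (1 + (-1)^a * zc s x * cos \<theta> + (-1)^b * zc s y * cos \<theta>
      + (-1)^(a+b) * (zc s x * zc s y - sin \<theta> * wc s x * wc s y))/4"
proof -
  have psi: "psi \<theta> = (\<lambda>i j. if i = 0 \<and> j = 0 then of_real (cos (\<theta>/2)) else if i = 1 \<and> j = 1 then - of_real (sin (\<theta>/2)) else 0)"
    by (auto simp: psi_def fun_eq_iff)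
  have c1: "cos (\<theta>/2)^2 + sin (\<theta>/2)^2 = 1" by simp
  have c2: "cos (\<theta>/2)^2 - sin (\<theta>/2)^2 = cos \<theta>" using cos_double[of "\<theta>/2"] by simp
  have c3: "2 * cos (\<theta>/2) * sin (\<theta>/2) = sin \<theta>" using sin_double[of "\<theta>/2"] by (simp add: mult_ac)
  show ?thesis
    unfolding qprob_def psi obsA_eq expval_formula c1 c2
    using c3 by (simp add: mult_ac)
qed

lemma coeffs:
  fixes s :: real
  assumes "0 < s" "s < 1" 
  shows "zc s 0 * sqrt (1 - s^2) = -(2+s)*(1-s)/(2-s)"
    "zc s 1 * sqrt (1 - s^2) = -(1-s)"
    "zc s 0 * zc s 1 = (2+s)*(1-s)/((2-s)*(1+s))"
    "wc s 0 * wc s 1 = - (2 * s ^ 2 / ((2 - s) * (1 + s)))"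
    "zc s 0 * zc s 0 = (2+s)^2*(1-s)/((2-s)^2*(1+s))"
    "wc s 0 * wc s 0 = 2 * s ^ 3 / ((2 - s) ^ 2 * (1 + s))"
    "zc s 1 * zc s 1 = (1-s)/(1+s)"
    "wc s 1 * wc s 1 = 2 * s / (1 + s)"
proof -
  have q0: "sqrt (1+s) > 0" using assms by simp
  have r2: "sqrt (1-s) * sqrt (1-s) = 1 - s" using assms by simp
  have q2: "sqrt (1+s) * sqrt (1+s) = 1 + s" using assms by simp
  have s2: "sqrt s * sqrt s = s" using assms by simp
  have t2: "sqrt 2 * sqrt 2 = 2" by simp
  have r2': "sqrt (1-s) * (sqrt (1-s) * x) = (1 - s) * x" for x using assms by (simp add: mult.assoc[symmetric])
  have q2': "sqrt (1+s) * (sqrt (1+s) * x) = (1 + s) * x" for x using assms by (simp add: mult.assoc[symmetric])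
  have s2': "sqrt s * (sqrt s * x) = s * x" for x using assms by (simp add: mult.assoc[symmetric])
  have t2': "sqrt 2 * (sqrt 2 * x) = 2 * x" for x by (simp add: mult.assoc[symmetric])
  have "s * s \<le> s * 1" using assms by (intro mult_left_mono) auto
  then have den: "s + 2 - s * s \<noteq> 0" "s + 2 \<noteq> s * s" using assms by linarith+
  note R = r2 q2 s2 t2 r2' q2' s2' t2'
  have sq: "sqrt (1 - s^2) = sqrt (1-s) * sqrt (1+s)"
    by (simp add: real_sqrt_mult[symmetric] power2_eq_square algebra_simps)
  have pw: "s powr (3/2) = s * sqrt s"
  proof -
    have e: "(3/2::real) = 1 + 1/2" by simp
    have "s powr (3/2) = s powr 1 * s powr (1/2)" unfolding e by (rule powr_add)
    also have "... = s * sqrt s" using assms by (simp add: powr_half_sqrt)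
    finally show ?thesis .
  qed
  have z1: "sqrt ((1 - s) / (1 + s)) = sqrt (1-s) / sqrt (1+s)" by (simp add: real_sqrt_divide)
  have w1: "sqrt (2 * s / (1 + s)) = sqrt 2 * sqrt s / sqrt (1+s)" by (simp add: real_sqrt_divide real_sqrt_mult)
  have ns: "2 - s \<noteq> 0" using assms by simp
  show "zc s 0 * sqrt (1 - s^2) = -(2+s)*(1-s)/(2-s)"
    using q0 ns assms unfolding zc_def sq by (simp add: field_simps r2; simp add: R algebra_simps power2_eq_square power3_eq_cube; (simp add: divide_simps den algebra_simps)?)
  show "zc s 1 * sqrt (1 - s^2) = -(1-s)"
    using q0 ns assms unfolding zc_def sq z1 by (simp add: field_simps r2; simp add: R algebra_simps power2_eq_square power3_eq_cube; (simp add: divide_simps den algebra_simps)?)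
  show "zc s 0 * zc s 1 = (2+s)*(1-s)/((2-s)*(1+s))"
    using q0 ns assms unfolding zc_def z1 by (simp add: field_simps r2 q2; simp add: R algebra_simps power2_eq_square power3_eq_cube; (simp add: divide_simps den algebra_simps)?)
  show "wc s 0 * wc s 1 = - (2 * s ^ 2 / ((2 - s) * (1 + s)))"
    using q0 ns assms unfolding wc_def w1 pw by (simp add: field_simps s2 t2 q2 power2_eq_square; simp add: R algebra_simps power2_eq_square power3_eq_cube; (simp add: divide_simps den algebra_simps)?)
  show "zc s 0 * zc s 0 = (2+s)^2*(1-s)/((2-s)^2*(1+s))"
    using q0 ns assms unfolding zc_def by (simp add: field_simps r2 q2 power2_eq_square; simp add: R algebra_simps power2_eq_square power3_eq_cube; (simp add: divide_simps den algebra_simps)?)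
  show "wc s 0 * wc s 0 = 2 * s ^ 3 / ((2 - s) ^ 2 * (1 + s))"
    using q0 ns assms unfolding wc_def pw by (simp add: field_simps s2 t2 q2 power2_eq_square power3_eq_cube; simp add: R algebra_simps power2_eq_square power3_eq_cube; (simp add: divide_simps den algebra_simps)?)
  show "zc s 1 * zc s 1 = (1-s)/(1+s)"
    using q0 ns assms unfolding zc_def z1 by (simp add: field_simps r2 q2; simp add: R algebra_simps power2_eq_square power3_eq_cube; (simp add: divide_simps den algebra_simps)?)
  show "wc s 1 * wc s 1 = 2 * s / (1 + s)"
    using q0 ns assms unfolding wc_def w1 by (simp add: field_simps s2 t2 q2; simp add: R algebra_simps power2_eq_square power3_eq_cube; (simp add: divide_simps den algebra_simps)?)
qed


lemma local_bound:
  fixes e :: real and M :: "'l measure" and pA pB :: "nat \<Rightarrow> nat \<Rightarrow> nat \<Rightarrow> 'l \<Rightarrow> real"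
  assumes lm: "eps_local_model e p M pA pB" and e0: "0 \<le> e" and e1: "e < 1"
  shows "(1-e)*p 0 0 0 0 + e*(1-e)*p 1 1 0 0 - p 0 1 0 1 - p 1 0 1 0 - p 0 0 1 1 \<le> e*(1-e)"
proof -
  note L = lm[unfolded eps_local_model_def]
  note ps = L[THEN conjunct1]
  note meas = L[THEN conjunct2, THEN conjunct1, rule_format]
  note nrm = L[THEN conjunct2, THEN conjunct2, THEN conjunct1, rule_format]
  note nsA = L[THEN conjunct2, THEN conjunct2, THEN conjunct2, THEN conjunct1, rule_format]
  note nsB = L[THEN conjunct2, THEN conjunct2, THEN conjunct2, THEN conjunct2, THEN conjunct1, rule_format]
  note pe = L[THEN conjunct2, THEN conjunct2, THEN conjunct2, THEN conjunct2, THEN conjunct2, rule_format]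
  interpret prob_space M by (rule ps)
  have bndA: "0 \<le> pA a x y l \<and> pA a x y l \<le> 1" if "a \<le> 1" "x \<le> 1" "y \<le> 1" "l \<in> space M" for a x y l
    using nrm[OF that(2,3,4)] that(1) by (cases a) auto
  have bndB: "0 \<le> pB a x y l \<and> pB a x y l \<le> 1" if "a \<le> 1" "x \<le> 1" "y \<le> 1" "l \<in> space M" for a x y l
    using nrm[OF that(2,3,4)] that(1) by (cases a) auto
  have int: "integrable M (\<lambda>l. pA a x y l * pB b x y l)" if "a \<le> 1" "b \<le> 1" "x \<le> 1" "y \<le> 1" for a b x y
  proof (rule integrable_const_bound[where B=1])
    show "AE l in M. norm (pA a x y l * pB b x y l) \<le> 1"
    proof (rule AE_I2)
      fix l assume l: "l \<in> space M"
      have "0 \<le> pA a x y l" "pA a x y l \<le> 1" "0 \<le> pB b x y l" "pB b x y l \<le> 1"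
        using bndA[OF that(1,3,4) l] bndB[OF that(2,3,4) l] by auto
      then show "norm (pA a x y l * pB b x y l) \<le> 1"
        by (simp add: abs_mult mult_le_one)
    qed
    show "(\<lambda>l. pA a x y l * pB b x y l) \<in> borel_measurable M" using meas by (intro borel_measurable_times) auto
  qed
  define F where "F l = (1-e)*(pA 0 0 0 l*pB 0 0 0 l) + e*(1-e)*(pA 1 0 0 l * pB 1 0 0 l)
     - pA 0 0 1 l * pB 1 0 1 l - pA 1 1 0 l * pB 0 1 0 l - pA 0 1 1 l * pB 0 1 1 l" for l
  have hb: "has_bochner_integral M (\<lambda>l. pA a x y l * pB b x y l) (p a b x y)"
    if "a \<le> 1" "b \<le> 1" "x \<le> 1" "y \<le> 1" for a b x y
    using pe[OF that] int[OF that] has_bochner_integral_integrable by simp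
  have HF: "has_bochner_integral M F ((1-e)*p 0 0 0 0 + e*(1-e)*p 1 1 0 0 - p 0 1 0 1 - p 1 0 1 0 - p 0 0 1 1)"
    unfolding F_def
    by (intro has_bochner_integral_diff has_bochner_integral_add has_bochner_integral_mult_right hb) simp_all
  have intF: "integrable M F" using HF by (rule integrable.intros)
  have IF: "integral\<^sup>L M F = (1-e)*p 0 0 0 0 + e*(1-e)*p 1 1 0 0 - p 0 1 0 1 - p 1 0 1 0 - p 0 0 1 1"
    using HF by (rule has_bochner_integral_integral_eq)
  have "integral\<^sup>L M F \<le> integral\<^sup>L M (\<lambda>_. e*(1-e))"
  proof (rule integral_mono[OF intF])
    show "integrable M (\<lambda>_. e*(1-e))" by simp
    fix l assume l: "l \<in> space M"
    have hA: "pA 1 x y l = 1 - pA 0 x y l" if "x \<le> 1" "y \<le> 1" for x y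
      using nrm[OF that l] by linarith
    have hB: "pB 1 x y l = 1 - pB 0 x y l" if "x \<le> 1" "y \<le> 1" for x y
      using nrm[OF that l] by linarith
    have absh: "\<bar>a0 - b0\<bar> \<le> e" if "a1 = 1 - a0" "b1 = 1 - b0" "(\<bar>a0-b0\<bar> + \<bar>a1-b1\<bar>)/2 \<le> e" for a0 a1 b0 b1 :: real
      using that by auto
    have s1: "pA 1 0 0 l = 1 - pA 0 0 0 l" "pB 1 0 0 l = 1 - pB 0 0 0 l"
      "pB 1 0 1 l = 1 - pB 0 0 1 l" "pA 1 1 0 l = 1 - pA 0 1 0 l"
      by (rule hA hB; simp)+
    have d1: "\<bar>pA 0 0 0 l - pA 0 0 1 l\<bar> \<le> e"
      by (rule absh[OF hA hA nsA[OF _ _ _ l]]) simp_all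
    have d2: "\<bar>pA 0 1 0 l - pA 0 1 1 l\<bar> \<le> e"
      by (rule absh[OF hA hA nsA[OF _ _ _ l]]) simp_all
    have d3: "\<bar>pB 0 0 0 l - pB 0 1 0 l\<bar> \<le> e"
      by (rule absh[OF hB hB nsB[OF _ _ _ l]]) simp_all
    have d4: "\<bar>pB 0 0 1 l - pB 0 1 1 l\<bar> \<le> e"
      by (rule absh[OF hB hB nsB[OF _ _ _ l]]) simp_all
    have bA: "0 \<le> pA 0 x y l" "pA 0 x y l \<le> 1" if "x \<le> 1" "y \<le> 1" for x y
      using bndA[OF _ that l, of 0] by auto
    have bB: "0 \<le> pB 0 x y l" "pB 0 x y l \<le> 1" if "x \<le> 1" "y \<le> 1" for x y
      using bndB[OF _ that l, of 0] by auto
    have "(1-e)*(pA 0 0 0 l*pB 0 0 0 l) + e*(1-e)*((1-pA 0 0 0 l)*(1-pB 0 0 0 l))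
       - pA 0 0 1 l*(1-pB 0 0 1 l) - (1-pA 0 1 0 l)*pB 0 1 0 l - pA 0 1 1 l*pB 0 1 1 l \<le> e*(1-e)"
      by (rule pointwise[OF e0 e1 bA(1,2)[of 0 0] bB(1,2)[of 0 0] bA(1,2)[of 0 1] bB(1,2)[of 0 1]
           bA(1,2)[of 1 0] bB(1,2)[of 1 0] bA(1,2)[of 1 1] bB(1,2)[of 1 1] d1 d2 d3 d4]; simp)
    then show "F l \<le> e*(1-e)" unfolding F_def s1 .
  qed
  also have "... = e*(1-e)" by (simp add: prob_space)
  finally show ?thesis using IF by simp
qed

theorem mainTheorem7:
  fixes \<epsilon> :: real
    and M :: "'l measure"
    and pA pB :: "nat \<Rightarrow> nat \<Rightarrow> nat \<Rightarrow> 'l \<Rightarrow> real"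
  assumes "0 \<le> \<epsilon>" and "\<epsilon> < 1"
  defines "\<theta> \<equiv> arcsin (3 - sqrt (4 * \<epsilon> + 5))"
  defines "s \<equiv> sin \<theta>"
  defines "p \<equiv> qprob \<theta> s"
  shows "p 0 1 0 1 = 0 \<and> p 1 0 1 0 = 0 \<and> p 0 0 1 1 = 0
    \<and> p 0 0 0 0 + \<epsilon> * p 1 1 0 0
        = ((4 * \<epsilon> + 5) * sqrt (4 * \<epsilon> + 5) - (12 * \<epsilon> + 11)) / (2 * (1 + \<epsilon>))
    \<and> ((4 * \<epsilon> + 5) * sqrt (4 * \<epsilon> + 5) - (12 * \<epsilon> + 11)) / (2 * (1 + \<epsilon>)) > \<epsilon>
    \<and> (1 - \<epsilon>) * p 0 0 0 0 + \<epsilon> * (1 - \<epsilon>) * p 1 1 0 0 - p 0 1 0 1 - p 1 0 1 0 - p 0 0 1 1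
        > \<epsilon> * (1 - \<epsilon>)
    \<and> \<not> eps_local_model \<epsilon> p M pA pB"
proof -
  define t where "t = sqrt (4 * \<epsilon> + 5)"
  have t2: "t * t = 4 * \<epsilon> + 5" unfolding t_def using assms(1) by simp
  have tlt: "t < 3"
  proof -
    have "t < sqrt 9" unfolding t_def using assms(2) by (intro real_sqrt_less_mono) simp
    then show ?thesis by simp
  qed
  have tgt: "t > 2"
  proof -
    have "sqrt 4 < t" unfolding t_def using assms(1) by (intro real_sqrt_less_mono) simp
    then show ?thesis by simp
  qed
  have sv: "s = 3 - t" unfolding s_def \<theta>_def t_def[symmetric] using tlt tgt by simp
  have s0: "0 < s" and s1: "s < 1" using sv tlt tgt by auto
  have cth: "cos \<theta> = sqrt (1 - s^2)" unfolding \<theta>_def t_def[symmetric] sv using tlt tgt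
    by (intro cos_arcsin) auto
  have sth: "sin \<theta> = s" using s_def by simp
  have eps: "\<epsilon> = ((3 - s) * (3 - s) - 5) / 4" using t2 sv by simp
  note C0 = coeffs[OF s0 s1]
  have Cc: "zc s 1 * zc s 0 = (2+s)*(1-s)/((2-s)*(1+s))" "wc s 1 * wc s 0 = - (2 * s ^ 2 / ((2 - s) * (1 + s)))"
    using C0(3,4) by (simp_all add: mult.commute)
  note C = C0 C0[unfolded One_nat_def] Cc Cc[unfolded One_nat_def]
  have ns0: "2 - s \<noteq> 0" "1 + s \<noteq> 0" using s0 s1 by auto
  have "s * s \<le> s * 1" using s0 s1 by (intro mult_left_mono) auto
  then have den: "s + 2 - s * s \<noteq> 0" "s + 2 \<noteq> s * s" "(2 - s) * (1 + s) \<noteq> 0" using s0 s1 by (linarith, linarith, simp)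
  note ns = ns0 den
  have pf: "p a b x y = (1 + (-1)^a * zc s x * sqrt (1 - s^2) + (-1)^b * zc s y * sqrt (1 - s^2)
      + (-1)^(a+b) * (zc s x * zc s y - s * (wc s x * wc s y)))/4" for a b x y
    unfolding p_def qprob_formula cth sth by (simp add: mult.assoc)
  have P1: "p 0 1 0 1 = 0" unfolding pf using ns0 apply (simp add: C) apply (simp add: divide_simps) apply (simp add: algebra_simps power2_eq_square power3_eq_cube) done
  have P2: "p 1 0 1 0 = 0" unfolding pf using ns0 apply (simp add: C) apply (simp add: divide_simps) apply (simp add: algebra_simps power2_eq_square power3_eq_cube) done
  have P3: "p 0 0 1 1 = 0" unfolding pf using ns0 apply (simp add: C) apply (simp add: divide_simps) apply (simp add: algebra_simps power2_eq_square power3_eq_cube) done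
  define R where "R = ((4 * \<epsilon> + 5) * sqrt (4 * \<epsilon> + 5) - (12 * \<epsilon> + 11)) / (2 * (1 + \<epsilon>))"
  have R_t: "R = (t*t*t - (3*t*t - 4)) / ((t*t - 1)/2)"
  proof -
    have a1: "4 * \<epsilon> + 5 = t * t" using t2 by simp
    have a2: "12 * \<epsilon> + 11 = 3*t*t - 4" using t2 by simp
    have a3: "2 * (1 + \<epsilon>) = (t*t - 1)/2" using t2 by simp
    show ?thesis unfolding R_def t_def[symmetric] unfolding a2 a3 a1 using tgt by (simp add: mult.assoc)
  qed
  have tsq: "2 * 2 < t * t" using mult_strict_mono[of 2 t 2 t] tgt by simp
  have tt: "t - 1 \<noteq> 0" "t + 1 \<noteq> 0" "t * t - 1 \<noteq> 0" "t*t \<noteq> 1" using tgt tsq by auto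
  have R_s: "R = 2 * (1 - s)^2 / (2 - s)"
  proof -
    have "R = 2 * (t - 2)^2 / (t - 1)" unfolding R_t using tt
      by (simp add: field_simps) (simp add: algebra_simps power2_eq_square)
    then show ?thesis unfolding sv by (simp add: algebra_simps)
  qed
  have P4: "p 0 0 0 0 + \<epsilon> * p 1 1 0 0 = R"
    unfolding pf R_s eps using ns0 apply (simp add: C) apply (simp add: divide_simps) apply (simp add: algebra_simps power2_eq_square power3_eq_cube) done
  have R_e: "R - \<epsilon> = s^3 / (4 * (2 - s))"
    unfolding R_s eps using ns0 apply (simp add: divide_simps) apply (simp add: algebra_simps power2_eq_square power3_eq_cube) done
  have R_gt: "R > \<epsilon>"
  proof -
    have "s^3 / (4 * (2 - s)) > 0" using s0 s1 by simp
    then show ?thesis using R_e by simp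
  qed
  have comb: "(1 - \<epsilon>) * p 0 0 0 0 + \<epsilon> * (1 - \<epsilon>) * p 1 1 0 0 - p 0 1 0 1 - p 1 0 1 0 - p 0 0 1 1
     = (1 - \<epsilon>) * R" using P1 P2 P3 P4[symmetric] by (simp add: algebra_simps)
  have big: "(1 - \<epsilon>) * R > \<epsilon> * (1 - \<epsilon>)"
    using R_gt assms(2) by (simp add: mult.commute[of \<epsilon>])
  have nl: "\<not> eps_local_model \<epsilon> p M pA pB"
  proof
    assume "eps_local_model \<epsilon> p M pA pB"
    from local_bound[OF this assms(1,2)] comb big show False by linarith
  qed
  show ?thesis using P1 P2 P3 P4 R_gt comb big nl unfolding R_def by simp
qed
end
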